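(* Let $\mathcal P_n$ be the set of pairs $(\lambda,\mu)$ of partitions $\lambda=(\lambda_1\ge\dots\ge\lambda_s>0)$, $\mu=(\mu_1\ge\dots\ge\mu_r>0)$ with $|\lambda|+|\mu|=n$ and $r$ even (these parametrize conjugacy classes of the Weyl group of $so_{2n}$). Define $\Phi(\lambda,\mu)$ to be the partition of $2n$ with parts $\lambda_1,\lambda_1,\lambda_2,\lambda_2,\dots,\lambda_s,\lambda_s$, $2\mu_1+1,\dots,2\mu_{r/2}+1$, $2\mu_{r/2+1}-1,\dots,2\mu_r-1$. Then $\Phi$ maps $\mathcal P_n$ onto the set of partitions of $2n$ in which every even part occurs with even multiplicity, and the restriction of $\Phi$ to the pairs with $\lambda=\emptyset$ is injective. *)

theory Defs
  imports Main
begin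

definition is_partition :: "nat list \<Rightarrow> bool" where
  "is_partition xs \<longleftrightarrow> sorted_wrt (\<ge>) xs \<and> (\<forall>x\<in>set xs. 0 < x)"

definition P :: "nat \<Rightarrow> (nat list \<times> nat list) set" where
  "P n = {(la, mu). is_partition la \<and> is_partition mu \<and>
                    sum_list la + sum_list mu = n \<and> even (length mu)}"

definition Phi :: "nat list \<times> nat list \<Rightarrow> nat list" where
  "Phi p = (case p of (la, mu) \<Rightarrow>
     rev (sort (concat (map (\<lambda>x. [x, x]) la)
               @ map (\<lambda>m. 2 * m + 1) (take (length mu div 2) mu)
               @ map (\<lambda>m. 2 * m - 1) (drop (length mu div 2) mu))))"

definition even_mult_partitions :: "nat \<Rightarrow> nat list set" where
  "even_mult_partitions m = {p. is_partition p \<and> sum_list p = m \<and>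
                              (\<forall>k. even k \<longrightarrow> even (count_list p k))}"

end

theory Submission
  imports Defs "HOL-Library.Multiset"
begin

definition L :: "nat list \<times> nat list \<Rightarrow> nat list" where
  "L p = (case p of (la, mu) \<Rightarrow> concat (map (\<lambda>x. [x, x]) la)
               @ map (\<lambda>m. 2 * m + 1) (take (length mu div 2) mu)
               @ map (\<lambda>m. 2 * m - 1) (drop (length mu div 2) mu))"

lemma Phi_L: "Phi p = rev (sort (L p))"
  by (simp add: Phi_def L_def split: prod.splits)

lemma rev_sort_id:
  assumes "sorted_wrt (\<ge>) xs" shows "rev (sort xs) = xs"
proof -
  have "sorted (rev xs)" using assms by (simp add: sorted_wrt_rev)
  hence "sort xs = rev xs" by (intro properties_for_sort) simp_all
  thus ?thesis by simp
qed

lemma odd_parity: "(\<forall>x\<in>set xs. odd (x::nat)) \<Longrightarrow> even (sum_list xs) = even (length xs)"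
  by (induction xs) auto

lemma sum_minus: "(\<forall>m\<in>set xs. 0 < (m::nat)) \<Longrightarrow>
   sum_list (map (\<lambda>m. 2 * m - 1) xs) + length xs = 2 * sum_list xs"
  by (induction xs) auto

lemma sum_plus: "sum_list (map (\<lambda>m. 2 * m + 1) xs) = 2 * sum_list xs + length (xs::nat list)"
  by (induction xs) auto

lemma sum_concat: "sum_list (concat (map (\<lambda>x. [x, x]) xs)) = 2 * sum_list (xs::nat list)"
  by (induction xs) auto

lemma count_concat: "count_list (concat (map (\<lambda>x. [x, x]) xs)) k = 2 * count_list xs k"
  by (induction xs) auto

lemma count_odd: "even k \<Longrightarrow> (\<forall>x\<in>set xs. odd (f x :: nat)) \<Longrightarrow> count_list (map f xs) k = 0"
  by (induction xs) auto

lemma odd_m1: "0 < m \<Longrightarrow> odd (2 * m - 1 :: nat)"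
  by (cases m) auto

lemma sum_L:
  assumes "is_partition mu" "even (length mu)"
  shows "sum_list (L (la, mu)) = 2 * (sum_list la + sum_list mu)"
proof -
  let ?h = "length mu div 2"
  have pos: "\<forall>m\<in>set (drop ?h mu). 0 < m" using assms(1) unfolding is_partition_def
    by (meson in_set_dropD)
  have l1: "length (take ?h mu) = ?h" and l2: "length (drop ?h mu) = ?h"
    using assms(2) by auto
  have "sum_list mu = sum_list (take ?h mu) + sum_list (drop ?h mu)"
    by (metis append_take_drop_id sum_list_append)
  thus ?thesis using sum_minus[OF pos] sum_plus[of "take ?h mu"] sum_concat[of la] l1 l2
    unfolding L_def by (simp, arith)
qed

lemma Phi_in:
  assumes "(la, mu) \<in> P n" shows "Phi (la, mu) \<in> even_mult_partitions (2 * n)"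
proof -
  from assms have pl: "is_partition la" and pm: "is_partition mu"
    and s: "sum_list la + sum_list mu = n" and e: "even (length mu)"
    by (auto simp: P_def)
  let ?h = "length mu div 2"
  have posm: "\<forall>m\<in>set mu. 0 < m" using pm by (simp add: is_partition_def)
  have posl: "\<forall>m\<in>set la. 0 < m" using pl by (simp add: is_partition_def)
  have posd: "\<forall>m\<in>set (drop ?h mu). odd (2 * m - 1)" using posm
    using odd_m1 by (blast dest: in_set_dropD)
  have posd0: "\<forall>m\<in>set (drop ?h mu). 0 < m" using posm by (blast dest: in_set_dropD)
  have posL: "\<forall>x\<in>set (L (la, mu)). 0 < x" using posm posl posd0 unfolding L_def
    by (auto dest: in_set_takeD in_set_dropD)
  have part: "is_partition (Phi (la, mu))"
    unfolding is_partition_def Phi_L using posL by (simp add: sorted_wrt_rev)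
  have sum: "sum_list (Phi (la, mu)) = 2 * n"
    unfolding Phi_L using sum_L[OF pm e, of la] s
    by (metis mset_rev mset_sort sum_mset_sum_list)
  have cnt: "even (count_list (Phi (la, mu)) k)" if "even k" for k
  proof -
    have "count_list (Phi (la, mu)) k = count_list (L (la, mu)) k"
      unfolding Phi_L by (metis count_mset mset_rev mset_sort)
    also have "\<dots> = 2 * count_list la k"
      using that count_odd[of k "take ?h mu" "\<lambda>m. 2 * m + 1"]
        count_odd[of k "drop ?h mu" "\<lambda>m. 2 * m - 1"] posm
        posd
      by (auto simp: L_def count_concat dest: in_set_dropD)
    finally show ?thesis by simp
  qed
  show ?thesis using part sum cnt by (simp add: even_mult_partitions_def)
qed

lemma L_sorted:
  assumes "is_partition mu" shows "sorted_wrt (\<ge>) (L ([], mu))"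
proof -
  let ?h = "length mu div 2"
  have sm: "sorted_wrt (\<ge>) (take ?h mu @ drop ?h mu)"
    using assms by (simp add: is_partition_def)
  hence s1: "sorted_wrt (\<ge>) (take ?h mu)" and s2: "sorted_wrt (\<ge>) (drop ?h mu)"
    and s3: "\<forall>x\<in>set (take ?h mu). \<forall>y\<in>set (drop ?h mu). y \<le> x"
    unfolding sorted_wrt_append by blast+
  have a: "sorted_wrt (\<ge>) (map (\<lambda>m. 2 * m + 1) (take ?h mu))"
    using s1 by (simp add: sorted_wrt_map)
  have b: "sorted_wrt (\<ge>) (map (\<lambda>m. 2 * m - 1) (drop ?h mu))"
    using s2 by (simp add: sorted_wrt_map) (rule sorted_wrt_mono_rel[OF _ s2], simp)
  show ?thesis unfolding L_def using a b s3
    by (auto simp: sorted_wrt_append) (meson le_trans diff_le_self mult_le_mono2 le_SucI)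
qed

lemma recover:
  assumes "is_partition mu"
  shows "map (\<lambda>y. (y - 1) div 2) (take (length (L ([], mu)) div 2) (L ([], mu)))
       @ map (\<lambda>y. (y + 1) div 2) (drop (length (L ([], mu)) div 2) (L ([], mu))) = mu"
proof -
  let ?h = "length mu div 2"
  have pos: "\<forall>m\<in>set (drop ?h mu). 0 < m" using assms
    by (auto simp: is_partition_def dest: in_set_dropD)
  have len: "length (L ([], mu)) = length mu" by (simp add: L_def)
  have lt: "length (take ?h mu) = ?h" by simp
  have t: "take ?h (L ([], mu)) = map (\<lambda>m. 2 * m + 1) (take ?h mu)"
    unfolding L_def by simp
  have d: "drop ?h (L ([], mu)) = map (\<lambda>m. 2 * m - 1) (drop ?h mu)"
    unfolding L_def by simp
  have d2: "map (\<lambda>y. (y + 1) div 2) (map (\<lambda>m. 2 * m - 1) (drop ?h mu)) = drop ?h mu"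
    using pos by (auto intro!: map_idI)
  show ?thesis unfolding len t d d2 by (simp add: comp_def)
qed

lemma inj_part: "inj_on (\<lambda>mu. Phi ([], mu)) {mu. ([], mu) \<in> P n}"
proof (rule inj_onI)
  fix mu1 mu2 assume m1: "mu1 \<in> {mu. ([], mu) \<in> P n}" and m2: "mu2 \<in> {mu. ([], mu) \<in> P n}"
    and eq: "Phi ([], mu1) = Phi ([], mu2)"
  have p1: "is_partition mu1" and p2: "is_partition mu2" using m1 m2 by (auto simp: P_def)
  have "L ([], mu1) = L ([], mu2)" using eq unfolding Phi_L
    rev_sort_id[OF L_sorted[OF p1]] rev_sort_id[OF L_sorted[OF p2]] .
  thus "mu1 = mu2" using recover[OF p1] recover[OF p2] by metis
qed

lemma odd_gap: "odd (x::nat) \<Longrightarrow> odd y \<Longrightarrow> y < x \<Longrightarrow> (y + 1) div 2 \<le> (x - 1) div 2"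
  by (elim oddE) auto

lemma mset_concat: "mset (concat (map (\<lambda>x. [x, x]) xs)) = mset xs + mset xs"
  by (induction xs) auto

lemma surj_part:
  assumes "p \<in> even_mult_partitions (2 * n)" shows "p \<in> Phi ` P n"
proof -
  have pp: "is_partition p" and sp: "sum_list p = 2 * n"
    and ev: "\<And>k. even k \<Longrightarrow> even (count_list p k)"
    using assms by (auto simp: even_mult_partitions_def)
  define M where "M = mset p"
  define A where "A = Abs_multiset (\<lambda>x. count M x div 2)"
  have finA: "finite {x. 0 < count M x div 2}"
    by (rule finite_subset[of _ "set_mset M"]) (auto, metis count_eq_zero_iff div_0 less_irrefl)
  have cA: "count A x = count M x div 2" for x using finA by (simp add: A_def)
  define D where "D = {x \<in> set_mset M. odd (count M x)}"
  have finD: "finite D" by (simp add: D_def)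
  have oddD: "\<forall>x\<in>D. odd x"
  proof
    fix x assume "x \<in> D"
    hence "odd (count M x)" by (simp add: D_def)
    thus "odd x" using ev[of x] by (auto simp: M_def count_mset)
  qed
  have MA: "M = A + A + mset_set D"
  proof (rule multiset_eqI)
    fix x
    show "count M x = count (A + A + mset_set D) x"
    proof (cases "x \<in> D")
      case True thus ?thesis using finD by (simp add: cA D_def) (metis odd_two_times_div_two_succ mult_2 Suc_eq_plus1)
    next
      case False
      hence "even (count M x)" by (auto simp: D_def count_eq_zero_iff[symmetric])
      thus ?thesis using False finD by (simp add: cA count_mset_set') presburger
    qed
  qed
  define ds where "ds = rev (sorted_list_of_set D)"
  have dsD: "mset ds = mset_set D" unfolding ds_def
    by (metis mset_rev mset_sorted_list_of_multiset sorted_list_of_mset_set)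
  have setds: "set ds = D" using finD by (simp add: ds_def)
  have sds: "sorted_wrt (>) ds" unfolding ds_def
    using strict_sorted_list_of_set[of D] by (simp add: sorted_wrt_rev)
  obtain xs where xsA: "mset xs = A" using ex_mset by blast
  define la where "la = rev (sort xs)"
  define k where "k = length ds div 2"
  define mu where "mu = map (\<lambda>z. (z - 1) div 2) (take k ds) @ map (\<lambda>z. (z + 1) div 2) (drop k ds)"
  have sumM: "sum_list p = 2 * sum_mset A + sum_list ds"
    by (metis M_def MA dsD sum_mset_sum_list sum_mset.union mult_2)
  have evds: "even (length ds)"
  proof -
    have "even (sum_list ds)" using sumM sp by presburger
    thus ?thesis using odd_parity[of ds] oddD setds by simp
  qed
  have lmu: "length mu = length ds" using evds by (simp add: mu_def k_def)
  have hk: "length mu div 2 = k" using lmu by (simp add: k_def)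
  have lk: "length (take k ds) = k" by (simp add: k_def)
  have tmu: "take k mu = map (\<lambda>z. (z - 1) div 2) (take k ds)"
    using lk by (simp add: mu_def)
  have dmu: "drop k mu = map (\<lambda>z. (z + 1) div 2) (drop k ds)"
    using lk by (simp add: mu_def)
  have oddds: "\<forall>x\<in>set ds. odd x" using oddD setds by simp
  have t1: "map (\<lambda>m. 2 * m + 1) (take k mu) = take k ds"
    unfolding tmu using oddds by (auto intro!: map_idI dest!: in_set_takeD)
  have t2: "map (\<lambda>m. 2 * m - 1) (drop k mu) = drop k ds"
    unfolding dmu using oddds by (auto intro!: map_idI dest!: in_set_dropD)
  have mla: "mset la = A" by (simp add: la_def xsA)
  have mL: "mset (L (la, mu)) = M"
  proof -
    have "mset (L (la, mu)) = mset la + mset la + (mset (take k ds) + mset (drop k ds))"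
      unfolding L_def hk prod.case mset_append mset_concat t1 t2 by (simp only: add.assoc)
    also have "\<dots> = M" unfolding mla MA dsD[symmetric] mset_append[symmetric] by simp
    finally show ?thesis .
  qed
  have Phip: "Phi (la, mu) = p"
  proof -
    have "sort (L (la, mu)) = rev p"
      using pp mL by (intro properties_for_sort) (auto simp: M_def is_partition_def sorted_wrt_rev)
    thus ?thesis by (simp add: Phi_L)
  qed
  have posM: "\<forall>x\<in>set_mset M. 0 < x" using pp by (simp add: M_def is_partition_def)
  have pla: "is_partition la"
  proof -
    have "set la = set_mset A" by (simp add: la_def flip: xsA)
    moreover have "set_mset A \<subseteq> set_mset M" by (auto simp: MA)
    ultimately show ?thesis using posM by (auto simp: is_partition_def la_def sorted_wrt_rev)
  qed
  have "sorted_wrt (>) (take k ds @ drop k ds)" using sds by simp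
  hence s1: "sorted_wrt (>) (take k ds)" and s2: "sorted_wrt (>) (drop k ds)"
    and s3: "\<forall>x\<in>set (take k ds). \<forall>y\<in>set (drop k ds). y < x"
    unfolding sorted_wrt_append by blast+
  have ot: "\<forall>x\<in>set (take k ds). odd x" and od: "\<forall>x\<in>set (drop k ds). odd x"
    using oddds by (auto dest: in_set_takeD in_set_dropD)
  have a: "sorted_wrt (\<ge>) (map (\<lambda>z. (z - 1) div 2) (take k ds))"
    using s1 by (simp add: sorted_wrt_map) (rule sorted_wrt_mono_rel[OF _ s1], simp add: div_le_mono)
  have b: "sorted_wrt (\<ge>) (map (\<lambda>z. (z + 1) div 2) (drop k ds))"
    using s2 by (simp add: sorted_wrt_map) (rule sorted_wrt_mono_rel[OF _ s2], simp add: div_le_mono)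
  have c: "\<forall>x\<in>set (take k ds). \<forall>y\<in>set (drop k ds). (y + 1) div 2 \<le> (x - 1) div 2"
  proof (intro ballI)
    fix x y assume x: "x \<in> set (take k ds)" and y: "y \<in> set (drop k ds)"
    show "(y + 1) div 2 \<le> (x - 1) div 2"
      by (rule odd_gap) (use x y s3 ot od in auto)
  qed
  have smu: "sorted_wrt (\<ge>) mu" unfolding mu_def using a b c
    by (auto simp: sorted_wrt_append)
  have ld: "length (drop k ds) = k" using evds by (simp add: k_def) presburger
  have pt: "0 < (x - 1) div 2" if "x \<in> set (take k ds)" for x
  proof -
    have "k > 0" using that by (cases k) auto
    then obtain y where y: "y \<in> set (drop k ds)" using ld
      by (metis length_greater_0_conv list.set_intros(1) neq_Nil_conv)
    hence "(y + 1) div 2 \<le> (x - 1) div 2" using c that by blast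
    moreover have "odd y" using y od by blast
    ultimately show ?thesis by (elim oddE) auto
  qed
  have pd: "\<forall>z\<in>set (drop k ds). 0 < (z + 1) div 2" using od by (auto elim!: oddE)
  have pmu: "is_partition mu" using smu pt pd unfolding is_partition_def mu_def by auto
  have "2 * (sum_list la + sum_list mu) = 2 * n"
    using sum_L[OF pmu, of la] lmu evds mL sp
    by (metis M_def sum_mset_sum_list)
  hence "(la, mu) \<in> P n" using pla pmu lmu evds by (simp add: P_def)
  thus ?thesis using Phip by (metis image_eqI)
qed

theorem mainTheorem7:
  fixes n :: nat
  shows "Phi ` P n = even_mult_partitions (2 * n)
         \<and> inj_on (\<lambda>mu. Phi ([], mu)) {mu. ([], mu) \<in> P n}"
  using Phi_in surj_part inj_part by fast

end
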